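(* A lattice $L$ is isomorphic to a lattice of subclones (i.e., to the lattice $\mathrm{Sb}(F)$ of all subclones of some clone $F$ on some set $A$) if and only if $L$ is isomorphic to the lattice of subalgebras of a block algebra.
   Context: Finitary operations on $A$ include nullary ones. A clone on $A$ is a set of finitary operations on $A$ containing all projections $p^{(n)}_i(a_1,\dots,a_n)=a_i$, closed under composition ($f$ $n$-ary, $g_1,\dots,g_n$ $k$-ary, $k\ge0$, gives $\mathbf a\mapsto f(g_1(\mathbf a),\dots,g_n(\mathbf a))$) and under restriction (if an $n$-ary $f$, $n\ge1$, does not depend on its last argument, the $(n-1)$-ary $g(a_1,\dots,a_{n-1})=f(a_1,\dots,a_{n-1},b)$ belongs to it). A subclone of a clone $F$ on $A$ is a subset of $F$ that is itself a clone on $A$; $\mathrm{Sb}(F)$ is ordered by inclusion. Let $\omega=\{1,2,\dots\}$. The top extension of $f:A^n\to A$ is $f^\top:A^\omega\to A$, $f^\top(s)=f(s_1,\dots,s_n)$. The full block algebra on $A$ has universe $\{f^\top: f\text{ finitary on }A\}$, nullary operations $\mathsf e_i(s)=s_i$ ($i\ge1$) and $(n+1)$-ary operations $q_n(\varphi,\psi_1,\dots,\psi_n)(s)=\varphi(s[\psi_1(s),\dots,\psi_n(s)])$ ($n\ge0$), where $s[b_1,\dots,b_n]$ replaces the first $n$ entries of $s$ by $b_1,\dots,b_n$. A block algebra (on $A$) is a subalgebra of the full block algebra on $A$. *)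

theory Defs
  imports Main
begin

text \<open>An n-ary operation on A is represented as a pair (n, f) with
  f :: 'a list => 'a, where f maps every list of length n over A into A,
  and is undefined (extensionally) on all other lists.\<close>

type_synonym 'a op = "nat \<times> ('a list \<Rightarrow> 'a)"

definition args :: "'a set \<Rightarrow> nat \<Rightarrow> 'a list set" where
  "args A n = {xs. set xs \<subseteq> A \<and> length xs = n}"

definition is_op :: "'a set \<Rightarrow> 'a op \<Rightarrow> bool" where
  "is_op A g \<longleftrightarrow> (\<forall>xs \<in> args A (fst g). snd g xs \<in> A)
                  \<and> (\<forall>xs. xs \<notin> args A (fst g) \<longrightarrow> snd g xs = undefined)"

definition proj :: "'a set \<Rightarrow> nat \<Rightarrow> nat \<Rightarrow> 'a op" where
  "proj A n i = (n, \<lambda>xs. if xs \<in> args A n then xs ! i else undefined)"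

definition comp_op :: "'a set \<Rightarrow> nat \<Rightarrow> ('a list \<Rightarrow> 'a) \<Rightarrow> 'a op list \<Rightarrow> 'a op" where
  "comp_op A k f gs = (k, \<lambda>xs. if xs \<in> args A k then f (map (\<lambda>g. snd g xs) gs) else undefined)"

definition restr_op :: "'a set \<Rightarrow> nat \<Rightarrow> ('a list \<Rightarrow> 'a) \<Rightarrow> 'a \<Rightarrow> 'a op" where
  "restr_op A n f b = (n - 1, \<lambda>xs. if xs \<in> args A (n - 1) then f (xs @ [b]) else undefined)"

definition indep_last :: "'a set \<Rightarrow> nat \<Rightarrow> ('a list \<Rightarrow> 'a) \<Rightarrow> bool" where
  "indep_last A n f \<longleftrightarrow>
     (\<forall>xs \<in> args A (n - 1). \<forall>a \<in> A. \<forall>b \<in> A. f (xs @ [a]) = f (xs @ [b]))"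

definition clone :: "'a set \<Rightarrow> 'a op set \<Rightarrow> bool" where
  "clone A F \<longleftrightarrow>
     (\<forall>g \<in> F. is_op A g)
   \<and> (\<forall>n i. i < n \<longrightarrow> proj A n i \<in> F)
   \<and> (\<forall>n f k gs. (n, f) \<in> F \<longrightarrow> length gs = n \<longrightarrow> (\<forall>g \<in> set gs. g \<in> F \<and> fst g = k)
        \<longrightarrow> comp_op A k f gs \<in> F)
   \<and> (\<forall>n f b. (n, f) \<in> F \<longrightarrow> n \<ge> 1 \<longrightarrow> indep_last A n f \<longrightarrow> b \<in> A
        \<longrightarrow> restr_op A n f b \<in> F)"

definition Sb :: "'a set \<Rightarrow> 'a op set \<Rightarrow> 'a op set set" where
  "Sb A F = {G. G \<subseteq> F \<and> clone A G}"

text \<open>Infinite sequences over A, indexed from 0 (position i here is the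
  paper's position i+1).\<close>
definition seqs :: "'a set \<Rightarrow> (nat \<Rightarrow> 'a) set" where
  "seqs A = {s. \<forall>i. s i \<in> A}"

definition top_ext :: "'a set \<Rightarrow> 'a op \<Rightarrow> (nat \<Rightarrow> 'a) \<Rightarrow> 'a" where
  "top_ext A g = (\<lambda>s. if s \<in> seqs A then snd g (map s [0..<fst g]) else undefined)"

definition full_block :: "'a set \<Rightarrow> ((nat \<Rightarrow> 'a) \<Rightarrow> 'a) set" where
  "full_block A = {top_ext A g | g. is_op A g}"

definition e_op :: "'a set \<Rightarrow> nat \<Rightarrow> (nat \<Rightarrow> 'a) \<Rightarrow> 'a" where
  "e_op A i = (\<lambda>s. if s \<in> seqs A then s i else undefined)"

definition repl :: "(nat \<Rightarrow> 'a) \<Rightarrow> 'a list \<Rightarrow> nat \<Rightarrow> 'a" where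
  "repl s bs = (\<lambda>i. if i < length bs then bs ! i else s i)"

definition q_op :: "'a set \<Rightarrow> ((nat \<Rightarrow> 'a) \<Rightarrow> 'a) \<Rightarrow> ((nat \<Rightarrow> 'a) \<Rightarrow> 'a) list \<Rightarrow> (nat \<Rightarrow> 'a) \<Rightarrow> 'a" where
  "q_op A phi psis = (\<lambda>s. if s \<in> seqs A then phi (repl s (map (\<lambda>psi. psi s) psis)) else undefined)"

definition block_closed :: "'a set \<Rightarrow> ((nat \<Rightarrow> 'a) \<Rightarrow> 'a) set \<Rightarrow> bool" where
  "block_closed A B \<longleftrightarrow>
     (\<forall>i. e_op A i \<in> B)
   \<and> (\<forall>phi psis. phi \<in> B \<longrightarrow> set psis \<subseteq> B \<longrightarrow> q_op A phi psis \<in> B)"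

definition block_algebra :: "'a set \<Rightarrow> ((nat \<Rightarrow> 'a) \<Rightarrow> 'a) set \<Rightarrow> bool" where
  "block_algebra A B \<longleftrightarrow> B \<subseteq> full_block A \<and> block_closed A B"

definition Sub :: "'a set \<Rightarrow> ((nat \<Rightarrow> 'a) \<Rightarrow> 'a) set \<Rightarrow> ((nat \<Rightarrow> 'a) \<Rightarrow> 'a) set set" where
  "Sub A B = {C. C \<subseteq> B \<and> block_closed A C}"

definition lattice_iso_to :: "('l::lattice \<Rightarrow> 'b set) \<Rightarrow> 'b set set \<Rightarrow> bool" where
  "lattice_iso_to h S \<longleftrightarrow> bij_betw h UNIV S \<and> (\<forall>x y. x \<le> y \<longleftrightarrow> h x \<subseteq> h y)"

end

theory Submission
  imports Defs
begin

lemma args_iff: "xs \<in> args A n \<longleftrightarrow> set xs \<subseteq> A \<and> length xs = n"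
  by (simp add: args_def)

lemma map_seq_args: "s \<in> seqs A \<Longrightarrow> map s [0..<n] \<in> args A n"
  by (auto simp: args_def seqs_def)

lemma T_apply: "s \<in> seqs A \<Longrightarrow> top_ext A g s = snd g (map s [0..<fst g])"
  by (simp add: top_ext_def)

lemma is_op_proj: "i < n \<Longrightarrow> is_op A (proj A n i)"
  by (auto simp: is_op_def proj_def args_def)

lemma is_op_comp:
  assumes "is_op A (n, f)" "length gs = n" "\<forall>g\<in>set gs. is_op A g \<and> fst g = k"
  shows "is_op A (comp_op A k f gs)"
proof -
  have "f (map (\<lambda>g. snd g xs) gs) \<in> A" if "xs \<in> args A k" for xs
  proof -
    have "map (\<lambda>g. snd g xs) gs \<in> args A n"
      using assms that by (auto simp: args_def is_op_def)
    then show ?thesis using assms(1) by (auto simp: is_op_def)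
  qed
  then show ?thesis by (auto simp: is_op_def comp_op_def)
qed

lemma is_op_restr:
  assumes "is_op A (n, f)" "n \<ge> 1" "b \<in> A"
  shows "is_op A (restr_op A n f b)"
proof -
  have "f (xs @ [b]) \<in> A" if "xs \<in> args A (n - 1)" for xs
  proof -
    have "xs @ [b] \<in> args A n" using that assms by (auto simp: args_def)
    then show ?thesis using assms(1) by (auto simp: is_op_def)
  qed
  then show ?thesis by (auto simp: is_op_def restr_op_def)
qed

lemma clone_parts:
  assumes "clone A G"
  shows "\<forall>g \<in> G. is_op A g"
    and "\<forall>n i. i < n \<longrightarrow> proj A n i \<in> G"
    and "\<forall>n f k gs. (n, f) \<in> G \<longrightarrow> length gs = n \<longrightarrow> (\<forall>g \<in> set gs. g \<in> G \<and> fst g = k)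
        \<longrightarrow> comp_op A k f gs \<in> G"
    and "\<forall>n f b. (n, f) \<in> G \<longrightarrow> n \<ge> 1 \<longrightarrow> indep_last A n f \<longrightarrow> b \<in> A
        \<longrightarrow> restr_op A n f b \<in> G"
proof -
  note c = assms[unfolded clone_def]
  show "\<forall>g \<in> G. is_op A g" by (rule conjunct1[OF c])
  show "\<forall>n i. i < n \<longrightarrow> proj A n i \<in> G" by (rule conjunct1[OF conjunct2[OF c]])
  show "\<forall>n f k gs. (n, f) \<in> G \<longrightarrow> length gs = n \<longrightarrow> (\<forall>g \<in> set gs. g \<in> G \<and> fst g = k)
        \<longrightarrow> comp_op A k f gs \<in> G" by (rule conjunct1[OF conjunct2[OF conjunct2[OF c]]])
  show "\<forall>n f b. (n, f) \<in> G \<longrightarrow> n \<ge> 1 \<longrightarrow> indep_last A n f \<longrightarrow> b \<in> A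
        \<longrightarrow> restr_op A n f b \<in> G" by (rule conjunct2[OF conjunct2[OF conjunct2[OF c]]])
qed

lemma clone_op: "clone A G \<Longrightarrow> g \<in> G \<Longrightarrow> is_op A g"
  by (drule clone_parts(1)) (erule bspec)

lemma clone_proj: "clone A G \<Longrightarrow> i < n \<Longrightarrow> proj A n i \<in> G"
  by (drule clone_parts(2)) (erule allE, erule allE, erule mp)

lemma clone_comp:
  assumes "clone A G" "(n, f) \<in> G" "length gs = n" "\<And>g. g \<in> set gs \<Longrightarrow> g \<in> G \<and> fst g = k"
  shows "comp_op A k f gs \<in> G"
  by (rule clone_parts(3)[OF assms(1), rule_format, OF assms(2,3)]) (rule assms(4))

lemma clone_restr:
  assumes "clone A G" "(n, f) \<in> G" "n \<ge> 1" "indep_last A n f" "b \<in> A"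
  shows "restr_op A n f b \<in> G"
  using clone_parts(4)[OF assms(1), rule_format, OF assms(2,3,4,5)] .

lemma clone_all: "clone A {g. is_op A g}"
  unfolding clone_def
proof (intro conjI allI impI ballI)
  fix g assume "g \<in> {g. is_op A g}" then show "is_op A g" by simp
next
  fix n i :: nat assume "i < n" then show "proj A n i \<in> {g. is_op A g}" by (simp add: is_op_proj)
next
  fix n f k gs assume "(n, f) \<in> {g. is_op A g}" "length gs = n" "\<forall>g\<in>set gs. g \<in> {g. is_op A g} \<and> fst g = k"
  then show "comp_op A k f gs \<in> {g. is_op A g}" using is_op_comp by simp
next
  fix n f b assume "(n, f) \<in> {g. is_op A g}" "1 \<le> n" "indep_last A n f" "b \<in> A"
  then show "restr_op A n f b \<in> {g. is_op A g}" using is_op_restr by simp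
qed

lemma T_proj: "i < n \<Longrightarrow> top_ext A (proj A n i) = e_op A i"
  by (rule ext) (auto simp: top_ext_def e_op_def proj_def map_seq_args)

lemma repl_seqs:
  assumes "s \<in> seqs A" "set bs \<subseteq> A"
  shows "repl s bs \<in> seqs A"
  using assms by (auto simp: seqs_def repl_def)

lemma map_repl: "length bs = n \<Longrightarrow> map (repl s bs) [0..<n] = bs"
  by (rule nth_equalityI) (auto simp: repl_def)

lemma T_comp:
  assumes "length gs = n" "\<forall>g\<in>set gs. is_op A g \<and> fst g = k"
  shows "top_ext A (comp_op A k f gs) = q_op A (top_ext A (n, f)) (map (top_ext A) gs)"
proof (rule ext)
  fix s
  show "top_ext A (comp_op A k f gs) s = q_op A (top_ext A (n, f)) (map (top_ext A) gs) s"
  proof (cases "s \<in> seqs A")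
    case True
    define bs where "bs = map (\<lambda>g. snd g (map s [0..<k])) gs"
    have bs: "map (\<lambda>psi. psi s) (map (top_ext A) gs) = bs"
      using assms True by (auto simp: bs_def T_apply)
    have "set bs \<subseteq> A" using assms True map_seq_args[OF True, of k]
      by (auto simp: bs_def is_op_def)
    then have rs: "repl s bs \<in> seqs A" using repl_seqs True by blast
    have lb: "length bs = n" using assms by (simp add: bs_def)
    have "q_op A (top_ext A (n, f)) (map (top_ext A) gs) s = top_ext A (n, f) (repl s bs)"
      using True by (simp only: q_op_def bs if_True)
    also have "\<dots> = f bs" using rs by (simp add: T_apply map_repl[OF lb])
    also have "\<dots> = top_ext A (comp_op A k f gs) s"
      using True by (simp add: T_apply comp_op_def map_seq_args bs_def)
    finally show ?thesis by simp
  qed (simp add: top_ext_def q_op_def)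
qed

lemma T_restr:
  assumes "n \<ge> 1" "indep_last A n f" "b \<in> A"
  shows "top_ext A (restr_op A n f b) = top_ext A (n, f)"
proof (rule ext)
  fix s
  show "top_ext A (restr_op A n f b) s = top_ext A (n, f) s"
  proof (cases "s \<in> seqs A")
    case True
    obtain m where m: "n = Suc m" using assms(1) by (cases n) auto
    have e: "map s [0..<n] = map s [0..<m] @ [s m]" by (simp add: m)
    have sm: "s m \<in> A" using True by (simp add: seqs_def)
    have xs: "map s [0..<m] \<in> args A (n - 1)" using map_seq_args[OF True, of m] by (simp add: m)
    have eq: "f (map s [0..<m] @ [b]) = f (map s [0..<m] @ [s m])"
      using assms(2) xs assms(3) sm unfolding indep_last_def by blast
    have "top_ext A (restr_op A n f b) s = f (map s [0..<m] @ [b])"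
      using True xs by (simp add: T_apply restr_op_def m)
    also have "\<dots> = top_ext A (n, f) s" using True by (simp only: eq e[symmetric] T_apply fst_conv snd_conv)
    finally show ?thesis .
  qed (simp add: top_ext_def)
qed

definition pad :: "'a set \<Rightarrow> nat \<Rightarrow> 'a op \<Rightarrow> 'a op" where
  "pad A K g = comp_op A K (snd g) (map (proj A K) [0..<fst g])"

lemma pad_in:
  assumes "clone A G" "g \<in> G" "fst g \<le> K"
  shows "pad A K g \<in> G"
proof -
  obtain n f where g: "g = (n, f)" by (cases g)
  have "comp_op A K f (map (proj A K) [0..<n]) \<in> G"
  proof (rule clone_comp[OF assms(1)])
    show "(n, f) \<in> G" using assms g by simp
    show "length (map (proj A K) [0..<n]) = n" by simp
    fix p assume "p \<in> set (map (proj A K) [0..<n])"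
    then obtain i where "i < n" "p = proj A K i" by auto
    then show "p \<in> G \<and> fst p = K" using clone_proj[OF assms(1), of i K] assms(3) g
      by (simp add: proj_def)
  qed
  then show ?thesis by (simp add: pad_def g)
qed

lemma fst_pad: "fst (pad A K g) = K" by (simp add: pad_def comp_op_def)

lemma pad_apply:
  assumes "s \<in> seqs A" "fst g \<le> K"
  shows "snd (pad A K g) (map s [0..<K]) = top_ext A g s"
proof -
  have eq: "map ((\<lambda>p. snd p (map s [0..<K])) \<circ> proj A K) [0..<fst g] = map s [0..<fst g]"
    using assms map_seq_args[OF assms(1), of K] by (auto simp: proj_def)
  have "snd (pad A K g) (map s [0..<K]) = snd g (map ((\<lambda>p. snd p (map s [0..<K])) \<circ> proj A K) [0..<fst g])"
    using map_seq_args[OF assms(1), of K] by (simp add: pad_def comp_op_def del: map_eq_conv)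
  also have "\<dots> = snd g (map s [0..<fst g])" by (simp only: eq)
  finally show ?thesis using assms(1) by (simp add: T_apply)
qed

lemma L1:
  assumes F: "clone A F" and C: "block_closed A C"
  shows "clone A {g \<in> F. top_ext A g \<in> C}"
proof -
  have Fop: "\<forall>g\<in>F. is_op A g" and Fproj: "\<And>n i. i < n \<Longrightarrow> proj A n i \<in> F"
    and Fcomp: "\<And>n f k gs. (n, f) \<in> F \<Longrightarrow> length gs = n \<Longrightarrow> (\<forall>g \<in> set gs. g \<in> F \<and> fst g = k)
        \<Longrightarrow> comp_op A k f gs \<in> F"
    and Frestr: "\<And>n f b. (n, f) \<in> F \<Longrightarrow> n \<ge> 1 \<Longrightarrow> indep_last A n f \<Longrightarrow> b \<in> A
        \<Longrightarrow> restr_op A n f b \<in> F"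
    using F unfolding clone_def by blast+
  have Ce: "\<And>i. e_op A i \<in> C" and Cq: "\<And>phi psis. phi \<in> C \<Longrightarrow> set psis \<subseteq> C \<Longrightarrow> q_op A phi psis \<in> C"
    using C unfolding block_closed_def by blast+
  let ?G = "{g \<in> F. top_ext A g \<in> C}"
  have 1: "\<forall>g\<in>?G. is_op A g" using Fop by blast
  have 2: "\<forall>n i. i < n \<longrightarrow> proj A n i \<in> ?G"
  proof (intro allI impI)
    fix n i :: nat assume "i < n"
    then have "proj A n i \<in> F" "top_ext A (proj A n i) = e_op A i" using Fproj T_proj by blast+
    then show "proj A n i \<in> ?G" using Ce by simp
  qed
  have 3: "\<forall>n f k gs. (n, f) \<in> ?G \<longrightarrow> length gs = n \<longrightarrow> (\<forall>g \<in> set gs. g \<in> ?G \<and> fst g = k)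
        \<longrightarrow> comp_op A k f gs \<in> ?G"
  proof (intro allI impI)
    fix n f k gs
    assume a: "(n, f) \<in> ?G" "length gs = n" "\<forall>g\<in>set gs. g \<in> ?G \<and> fst g = k"
    have ops: "\<forall>g\<in>set gs. is_op A g \<and> fst g = k" using a(3) Fop by blast
    have inF: "comp_op A k f gs \<in> F" using a Fcomp by blast
    have "set (map (top_ext A) gs) \<subseteq> C" using a(3) by auto
    then have "q_op A (top_ext A (n, f)) (map (top_ext A) gs) \<in> C"
      using a(1) Cq by blast
    then have "top_ext A (comp_op A k f gs) \<in> C" by (simp only: T_comp[OF a(2) ops])
    then show "comp_op A k f gs \<in> ?G" using inF by blast
  qed
  have 4: "\<forall>n f b. (n, f) \<in> ?G \<longrightarrow> n \<ge> 1 \<longrightarrow> indep_last A n f \<longrightarrow> b \<in> A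
        \<longrightarrow> restr_op A n f b \<in> ?G"
  proof (intro allI impI)
    fix n f b
    assume a: "(n, f) \<in> ?G" "1 \<le> n" "indep_last A n f" "b \<in> A"
    have "restr_op A n f b \<in> F" using a Frestr by blast
    moreover have "top_ext A (restr_op A n f b) \<in> C"
      using a by (simp only: T_restr[OF a(2,3,4)] mem_Collect_eq)
    ultimately show "restr_op A n f b \<in> ?G" by blast
  qed
  show ?thesis unfolding clone_def using 1 2 3 4 by blast
qed

lemma T_in: "is_op A g \<Longrightarrow> s \<in> seqs A \<Longrightarrow> top_ext A g s \<in> A"
  by (auto simp: is_op_def T_apply map_seq_args)

lemma list_from_image: "set ys \<subseteq> f ` X \<Longrightarrow> \<exists>xs. set xs \<subseteq> X \<and> ys = map f xs"
proof (induction ys)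
  case Nil then show ?case by simp
next
  case (Cons y ys)
  then obtain xs where "set xs \<subseteq> X" "ys = map f xs" by auto
  moreover obtain x where "x \<in> X" "y = f x" using Cons.prems by auto
  ultimately show ?case by (intro exI[of _ "x # xs"]) auto
qed

lemma L2:
  assumes G: "clone A G"
  shows "block_closed A (top_ext A ` G)"
  unfolding block_closed_def
proof (intro conjI allI impI)
  fix i
  have "proj A (Suc i) i \<in> G" using G by (simp add: clone_proj)
  moreover have "top_ext A (proj A (Suc i) i) = e_op A i" by (rule T_proj) simp
  ultimately show "e_op A i \<in> top_ext A ` G" by (intro image_eqI[of _ _ "proj A (Suc i) i"]) auto
next
  fix phi psis
  assume phi: "phi \<in> top_ext A ` G" and psis: "set psis \<subseteq> top_ext A ` G"
  obtain n f where nf: "(n, f) \<in> G" "phi = top_ext A (n, f)" using phi by auto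
  obtain gs where gs: "set gs \<subseteq> G" "psis = map (top_ext A) gs"
    using list_from_image[OF psis] by blast
  have ops: "\<forall>g\<in>G. is_op A g" using G clone_op by blast
  define m where "m = length gs"
  define K where "K = Max (insert n (fst ` set gs))"
  have nK: "n \<le> K" by (simp add: K_def)
  have gK: "fst g \<le> K" if "g \<in> set gs" for g using that by (simp add: K_def)
  define hs where "hs = map (\<lambda>i. if i < m then pad A K (gs ! i) else proj A K i) [0..<n]"
  have hs_len: "length hs = n" by (simp add: hs_def)
  have hs_in: "\<forall>h\<in>set hs. h \<in> G \<and> fst h = K"
  proof
    fix h assume "h \<in> set hs"
    then obtain i where i: "i < n" "h = (if i < m then pad A K (gs ! i) else proj A K i)"
      by (auto simp: hs_def)
    show "h \<in> G \<and> fst h = K"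
    proof (cases "i < m")
      case True
      then have "gs ! i \<in> set gs" by (simp add: m_def)
      then have "pad A K (gs ! i) \<in> G" using pad_in[OF G _ gK] gs by blast
      then show ?thesis using i True fst_pad by simp
    next
      case False
      then show ?thesis using i G nK clone_proj[OF G, of i K] by (simp add: proj_def)
    qed
  qed
  have r: "comp_op A K f hs \<in> G" using nf(1) hs_len hs_in by (intro clone_comp[OF G]) auto
  have "top_ext A (comp_op A K f hs) = q_op A phi psis"
  proof (rule ext)
    fix s
    show "top_ext A (comp_op A K f hs) s = q_op A phi psis s"
    proof (cases "s \<in> seqs A")
      case True
      define bs where "bs = map (\<lambda>psi. psi s) psis"
      have bs_len: "length bs = m" by (simp add: bs_def gs m_def)
      have bs_nth: "bs ! i = top_ext A (gs ! i) s" if "i < m" for i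
        using that by (simp add: bs_def gs m_def)
      have "\<forall>g\<in>set gs. top_ext A g s \<in> A" using gs(1) ops True T_in by blast
      then have "set bs \<subseteq> A" unfolding bs_def gs(2) by auto
      then have rs: "repl s bs \<in> seqs A" using repl_seqs True by blast
      have eq: "map (\<lambda>h. snd h (map s [0..<K])) hs = map (repl s bs) [0..<n]"
      proof (rule nth_equalityI)
        show "length (map (\<lambda>h. snd h (map s [0..<K])) hs) = length (map (repl s bs) [0..<n])"
          by (simp add: hs_len)
      next
        fix i assume "i < length (map (\<lambda>h. snd h (map s [0..<K])) hs)"
        then have i: "i < n" by (simp add: hs_len)
        show "map (\<lambda>h. snd h (map s [0..<K])) hs ! i = map (repl s bs) [0..<n] ! i"
        proof (cases "i < m")
          case True
          then have "gs ! i \<in> set gs" by (simp add: m_def)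
          then show ?thesis using i True pad_apply[OF \<open>s \<in> seqs A\<close> gK] bs_nth bs_len
            by (simp add: hs_def repl_def)
        next
          case False
          then show ?thesis using i nK map_seq_args[OF \<open>s \<in> seqs A\<close>, of K] bs_len
            by (simp add: hs_def repl_def proj_def)
        qed
      qed
      have "q_op A phi psis s = top_ext A (n, f) (repl s bs)"
        using True by (simp add: q_op_def bs_def nf(2))
      also have "\<dots> = f (map (repl s bs) [0..<n])" using rs by (simp add: T_apply)
      also have "\<dots> = top_ext A (comp_op A K f hs) s"
        using True by (simp add: T_apply comp_op_def map_seq_args eq[symmetric] del: map_eq_conv)
      finally show ?thesis by simp
    qed (simp add: top_ext_def q_op_def)
  qed
  then have eqT: "q_op A phi psis = top_ext A (comp_op A K f hs)" by (rule sym)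
  show "q_op A phi psis \<in> top_ext A ` G" using eqT r by (rule image_eqI[where f = "top_ext A"])
qed

definition ext_seq :: "'a list \<Rightarrow> 'a \<Rightarrow> nat \<Rightarrow> 'a" where
  "ext_seq xs a = (\<lambda>i. if i < length xs then xs ! i else a)"

lemma ext_seq_seqs: "set xs \<subseteq> A \<Longrightarrow> a \<in> A \<Longrightarrow> ext_seq xs a \<in> seqs A"
  by (auto simp: seqs_def ext_seq_def)

lemma map_ext_seq: "k \<le> length xs \<Longrightarrow> map (ext_seq xs a) [0..<k] = take k xs"
  by (rule nth_equalityI) (auto simp: ext_seq_def)

lemma T_eq_same:
  assumes "is_op A (k, f)" "is_op A (k, f')" "top_ext A (k, f) = top_ext A (k, f')"
  shows "f = f'"
proof (rule ext)
  fix xs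
  show "f xs = f' xs"
  proof (cases "xs \<in> args A k")
    case True
    then have "f xs \<in> A" using assms(1) by (auto simp: is_op_def)
    then obtain a where a: "a \<in> A" by blast
    have xs: "set xs \<subseteq> A" "length xs = k" using True by (auto simp: args_def)
    have s: "ext_seq xs a \<in> seqs A" by (rule ext_seq_seqs[OF xs(1) a])
    have m: "map (ext_seq xs a) [0..<k] = xs" using map_ext_seq[of k xs a] xs by simp
    have "top_ext A (k, f) (ext_seq xs a) = top_ext A (k, f') (ext_seq xs a)" using assms(3) by simp
    then show ?thesis using s m by (simp add: T_apply)
  next
    case False
    then show ?thesis using assms by (auto simp: is_op_def)
  qed
qed

lemma L3_empty:
  assumes "clone {} G" "is_op {} g"
  shows "g \<in> G"
proof -
  obtain k f where g: "g = (k, f)" by (cases g)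
  have k: "k \<ge> 1"
  proof (rule ccontr)
    assume "\<not> k \<ge> 1"
    then have "[] \<in> args {} k" by (auto simp: args_def)
    then show False using assms(2) g by (auto simp: is_op_def)
  qed
  have "args {} k = {}" using k by (auto simp: args_def)
  then have "g = proj {} k 0" using assms(2) g by (auto simp: is_op_def proj_def)
  then show ?thesis using clone_proj[OF assms(1), of 0 k] k by simp
qed

lemma L3_pad:
  assumes G: "clone A G" and g: "is_op A (k, f')"
    and nf: "(n, f) \<in> G" "top_ext A (n, f) = top_ext A (k, f')" and nk: "n \<le> k"
  shows "(k, f') \<in> G"
proof -
  have p: "pad A k (n, f) \<in> G" using pad_in[OF G nf(1)] nk by simp
  have op: "is_op A (pad A k (n, f))" using p G by (simp add: clone_op)
  obtain pf where pf: "pad A k (n, f) = (k, pf)" using fst_pad[of A k "(n, f)"] by (cases "pad A k (n, f)") simp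
  have "top_ext A (k, pf) = top_ext A (k, f')"
  proof (rule ext)
    fix s show "top_ext A (k, pf) s = top_ext A (k, f') s"
    proof (cases "s \<in> seqs A")
      case True
      have "top_ext A (k, pf) s = snd (pad A k (n, f)) (map s [0..<k])"
        using True pf by (simp add: T_apply)
      also have "\<dots> = top_ext A (n, f) s" using pad_apply[OF True] nk by simp
      finally show ?thesis using nf(2) by simp
    qed (simp add: top_ext_def)
  qed
  moreover have "is_op A (k, pf)" using op pf by simp
  ultimately have "pf = f'" using T_eq_same g by blast
  then show ?thesis using p pf by simp
qed

lemma L3_nonempty:
  assumes G: "clone A G" and b0: "b0 \<in> A" and g: "is_op A (k, f')"
  shows "(n, f) \<in> G \<Longrightarrow> n = k + d \<Longrightarrow> top_ext A (n, f) = top_ext A (k, f') \<Longrightarrow> (k, f') \<in> G"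
proof (induction d arbitrary: n f)
  case 0
  then show ?case using L3_pad[OF G g] by simp
next
  case (Suc d)
  have ops: "is_op A (n, f)" using Suc.prems(1) G by (simp add: clone_op)
  have n1: "n \<ge> 1" using Suc.prems(2) by simp
  have ind: "indep_last A n f" unfolding indep_last_def
  proof (intro ballI)
    fix xs a b assume xs: "xs \<in> args A (n - 1)" and a: "a \<in> A" and b: "b \<in> A"
    have xs': "set xs \<subseteq> A" "length xs = n - 1" using xs by (auto simp: args_def)
    have key: "f (xs @ [c]) = f' (take k xs)" if c: "c \<in> A" for c
    proof -
      have sc: "ext_seq (xs @ [c]) c \<in> seqs A" using xs' c by (intro ext_seq_seqs) auto
      have m1: "map (ext_seq (xs @ [c]) c) [0..<n] = xs @ [c]"
        using map_ext_seq[of n "xs @ [c]" c] xs' n1 by simp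
      have m2: "map (ext_seq (xs @ [c]) c) [0..<k] = take k xs"
        using map_ext_seq[of k "xs @ [c]" c] xs' Suc.prems(2) by simp
      have "top_ext A (n, f) (ext_seq (xs @ [c]) c) = top_ext A (k, f') (ext_seq (xs @ [c]) c)"
        using Suc.prems(3) by simp
      then show ?thesis using sc m1 m2 by (simp add: T_apply)
    qed
    show "f (xs @ [a]) = f (xs @ [b])" using key[OF a] key[OF b] by simp
  qed
  have r: "restr_op A n f b0 \<in> G" using clone_restr[OF G Suc.prems(1) n1 ind b0] .
  obtain rf where rf: "restr_op A n f b0 = (n - 1, rf)" by (simp add: restr_op_def)
  have "top_ext A (n - 1, rf) = top_ext A (k, f')"
    using T_restr[OF n1 ind b0] rf Suc.prems(3) by simp
  then show ?case using Suc.IH[of "n - 1" rf] r rf Suc.prems(2) by simp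
qed

lemma L3:
  assumes G: "clone A G" and g: "is_op A g" and T: "top_ext A g \<in> top_ext A ` G"
  shows "g \<in> G"
proof (cases "A = {}")
  case True then show ?thesis using L3_empty G g by blast
next
  case False
  then obtain b0 where b0: "b0 \<in> A" by blast
  obtain k f' where g': "g = (k, f')" by (cases g)
  from T obtain g0 where g0: "g0 \<in> G" "top_ext A g = top_ext A g0" by blast
  obtain n f where "g0 = (n, f)" by (cases g0)
  then have nf: "(n, f) \<in> G" "top_ext A (n, f) = top_ext A g" using g0 by auto
  show ?thesis
  proof (cases "n \<le> k")
    case True
    then show ?thesis using L3_pad[OF G, of k f' n f] g g' nf by simp
  next
    case False
    then show ?thesis using L3_nonempty[OF G b0, of k f' n f "n - k"] g g' nf by simp
  qed
qed

lemma iso_core: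
  assumes F: "clone A F"
  shows "bij_betw (\<lambda>G. top_ext A ` G) (Sb A F) (Sub A (top_ext A ` F))"
    and "\<And>G1 G2. G1 \<in> Sb A F \<Longrightarrow> G2 \<in> Sb A F \<Longrightarrow>
           (G1 \<subseteq> G2 \<longleftrightarrow> top_ext A ` G1 \<subseteq> top_ext A ` G2)"
proof -
  define \<Psi> where "\<Psi> C = {g \<in> F. top_ext A g \<in> C}" for C
  have PsiPhi: "\<Psi> (top_ext A ` G) = G" if "G \<in> Sb A F" for G
  proof
    show "G \<subseteq> \<Psi> (top_ext A ` G)" using that by (auto simp: \<Psi>_def Sb_def)
    show "\<Psi> (top_ext A ` G) \<subseteq> G"
    proof
      fix g assume "g \<in> \<Psi> (top_ext A ` G)"
      then have "g \<in> F" "top_ext A g \<in> top_ext A ` G" by (auto simp: \<Psi>_def)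
      moreover have "clone A G" using that by (simp add: Sb_def)
      moreover have "is_op A g" using \<open>g \<in> F\<close> F by (simp add: clone_op)
      ultimately show "g \<in> G" using L3 by blast
    qed
  qed
  have mapsto: "top_ext A ` G \<in> Sub A (top_ext A ` F)" if "G \<in> Sb A F" for G
    using that L2 by (auto simp: Sb_def Sub_def)
  have onto: "C \<in> (\<lambda>G. top_ext A ` G) ` Sb A F" if "C \<in> Sub A (top_ext A ` F)" for C
  proof -
    have "\<Psi> C \<in> Sb A F" using that L1[OF F] by (auto simp: \<Psi>_def Sb_def Sub_def)
    moreover have "top_ext A ` \<Psi> C = C" using that by (auto simp: \<Psi>_def Sub_def)
    ultimately show ?thesis by (intro image_eqI[of _ _ "\<Psi> C"]) auto
  qed
  show "bij_betw (\<lambda>G. top_ext A ` G) (Sb A F) (Sub A (top_ext A ` F))"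
    unfolding bij_betw_def
  proof
    show "inj_on (\<lambda>G. top_ext A ` G) (Sb A F)" 
    proof (rule inj_onI)
      fix x y assume xy: "x \<in> Sb A F" "y \<in> Sb A F" "top_ext A ` x = top_ext A ` y"
      have "x = \<Psi> (top_ext A ` x)" by (rule PsiPhi[OF xy(1), symmetric])
      also have "\<dots> = \<Psi> (top_ext A ` y)" by (simp only: xy(3))
      also have "\<dots> = y" by (rule PsiPhi[OF xy(2)])
      finally show "x = y" .
    qed
    show "(\<lambda>G. top_ext A ` G) ` Sb A F = Sub A (top_ext A ` F)" using mapsto onto by blast
  qed
  fix G1 G2 assume g: "G1 \<in> Sb A F" "G2 \<in> Sb A F"
  show "G1 \<subseteq> G2 \<longleftrightarrow> top_ext A ` G1 \<subseteq> top_ext A ` G2"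
  proof
    assume "top_ext A ` G1 \<subseteq> top_ext A ` G2"
    then have "\<Psi> (top_ext A ` G1) \<subseteq> \<Psi> (top_ext A ` G2)" by (auto simp: \<Psi>_def)
    then show "G1 \<subseteq> G2" using PsiPhi g by simp
  qed auto
qed

theorem proposition10p8:
  fixes L :: "'l::lattice itself"
  shows "(\<exists>(A::'a set) F (h::'l \<Rightarrow> 'a op set). clone A F \<and> lattice_iso_to h (Sb A F))
     \<longleftrightarrow> (\<exists>(A::'a set) B (h::'l \<Rightarrow> ((nat \<Rightarrow> 'a) \<Rightarrow> 'a) set).
            block_algebra A B \<and> lattice_iso_to h (Sub A B))"
proof
  assume "\<exists>(A::'a set) F (h::'l \<Rightarrow> 'a op set). clone A F \<and> lattice_iso_to h (Sb A F)"
  then obtain A F and h :: "'l \<Rightarrow> 'a op set" where F: "clone A F" and h: "lattice_iso_to h (Sb A F)"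
    by blast
  note ic = iso_core[OF F]
  have ba: "block_algebra A (top_ext A ` F)"
    using L2[OF F] clone_op[OF F] by (auto simp: block_algebra_def full_block_def)
  have hb: "bij_betw h UNIV (Sb A F)" and ho: "\<And>x y. x \<le> y \<longleftrightarrow> h x \<subseteq> h y"
    using h by (auto simp: lattice_iso_to_def)
  have hin: "h x \<in> Sb A F" for x using hb by (auto simp: bij_betw_def)
  have "lattice_iso_to ((\<lambda>G. top_ext A ` G) \<circ> h) (Sub A (top_ext A ` F))"
    unfolding lattice_iso_to_def
  proof
    show "bij_betw ((\<lambda>G. top_ext A ` G) \<circ> h) UNIV (Sub A (top_ext A ` F))" using bij_betw_trans[OF hb ic(1)] .
    show "\<forall>x y. x \<le> y \<longleftrightarrow> ((\<lambda>G. top_ext A ` G) \<circ> h) x \<subseteq> ((\<lambda>G. top_ext A ` G) \<circ> h) y"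
      using ho ic(2) hin by simp
  qed
  then show "\<exists>(A::'a set) B (h::'l \<Rightarrow> ((nat \<Rightarrow> 'a) \<Rightarrow> 'a) set).
            block_algebra A B \<and> lattice_iso_to h (Sub A B)" using ba by blast
next
  assume "\<exists>(A::'a set) B (h::'l \<Rightarrow> ((nat \<Rightarrow> 'a) \<Rightarrow> 'a) set).
            block_algebra A B \<and> lattice_iso_to h (Sub A B)"
  then obtain A B and h :: "'l \<Rightarrow> ((nat \<Rightarrow> 'a) \<Rightarrow> 'a) set"
    where B: "block_algebra A B" and h: "lattice_iso_to h (Sub A B)" by blast
  define F where "F = {g \<in> {g. is_op A g}. top_ext A g \<in> B}"
  have F: "clone A F" unfolding F_def
    using L1[OF clone_all, of A B] B by (simp add: block_algebra_def)
  have BF: "top_ext A ` F = B" using B by (auto simp: F_def block_algebra_def full_block_def)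
  note ic = iso_core[OF F, unfolded BF]
  define h' where "h' = inv_into (Sb A F) (\<lambda>G. top_ext A ` G) \<circ> h"
  have hb: "bij_betw h UNIV (Sub A B)" and ho: "\<And>x y. x \<le> y \<longleftrightarrow> h x \<subseteq> h y"
    using h by (auto simp: lattice_iso_to_def)
  have hin: "h x \<in> Sub A B" for x using hb by (auto simp: bij_betw_def)
  have ib: "bij_betw (inv_into (Sb A F) (\<lambda>G. top_ext A ` G)) (Sub A B) (Sb A F)" using bij_betw_inv_into[OF ic(1)] .
  have h'in: "h' x \<in> Sb A F" for x using ib hin by (auto simp: h'_def bij_betw_def)
  have hh': "(\<lambda>G. top_ext A ` G) (h' x) = h x" for x
    using ic(1) hin by (simp add: h'_def bij_betw_def f_inv_into_f)
  have "lattice_iso_to h' (Sb A F)"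
    unfolding lattice_iso_to_def
  proof
    show "bij_betw h' UNIV (Sb A F)" unfolding h'_def using bij_betw_trans[OF hb ib] .
    show "\<forall>x y. x \<le> y \<longleftrightarrow> h' x \<subseteq> h' y"
    proof (intro allI)
      fix x y
      have "x \<le> y \<longleftrightarrow> h x \<subseteq> h y" by (rule ho)
      also have "\<dots> \<longleftrightarrow> top_ext A ` h' x \<subseteq> top_ext A ` h' y" by (simp add: hh')
      also have "\<dots> \<longleftrightarrow> h' x \<subseteq> h' y" using ic(2)[OF h'in h'in] by simp
      finally show "x \<le> y \<longleftrightarrow> h' x \<subseteq> h' y" .
    qed
  qed
  then show "\<exists>(A::'a set) F (h::'l \<Rightarrow> 'a op set). clone A F \<and> lattice_iso_to h (Sb A F)"
    using F by blast
qed

end
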